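(* Let $H$ be a complex Hilbert space and $\{\mathcal{U}(t)\}_{t\geq 0}$ a strongly continuous semigroup on $H$ with generator $\mathcal{L}$. Let $z\in D(\mathcal{L}^\dagger)$ with $z\neq 0$, let $\mathcal{P}:=(\cdot,z)(z,z)^{-1}z$ and $\mathcal{Q}:=1-\mathcal{P}$. Let $\{e^{\overline{\mathcal{QL}}t}\}_{t\geq 0}$ denote the strongly continuous semigroup generated by $\overline{\mathcal{QL}}$. Then $\{\mathcal{G}(t):=\mathcal{P}+e^{\overline{\mathcal{QL}}t}\mathcal{Q}\}_{t\geq0}$ is a strongly continuous semigroup with generator $\overline{\mathcal{QL}}\mathcal{Q}$.
   Context: The scalar product $(\cdot,\cdot)$ on $H$ is conjugate-linear in its second argument. The generator is $\mathcal{L}x:=\lim_{h\searrow 0}\frac1h[\mathcal{U}(h)x-x]$ on the set $D(\mathcal{L})$ where the limit exists. $\dagger$ denotes the adjoint, the overbar the closure; $D(\overline{\mathcal{QL}}\mathcal{Q})=\{x\in H:\mathcal{Q}x\in D(\overline{\mathcal{QL}})\}$. The notation $\{e^{\mathcal{A}t}\}_{t\ge0}$ means the strongly continuous semigroup generated by $\mathcal{A}$. *)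

theory Defs
  imports "HOL-Analysis.Analysis"
begin

definition complex_hilbert_space :: "(complex \<Rightarrow> 'a::banach \<Rightarrow> 'a) \<Rightarrow> ('a \<Rightarrow> 'a \<Rightarrow> complex) \<Rightarrow> bool" where
  "complex_hilbert_space sm ip \<longleftrightarrow>
     (\<forall>r x. sm (complex_of_real r) x = scaleR r x) \<and>
     (\<forall>a b x. sm (a * b) x = sm a (sm b x)) \<and>
     (\<forall>a b x. sm (a + b) x = sm a x + sm b x) \<and>
     (\<forall>a x y. sm a (x + y) = sm a x + sm a y) \<and>
     (\<forall>x y z. ip (x + y) z = ip x z + ip y z) \<and>
     (\<forall>a x y. ip (sm a x) y = a * ip x y) \<and>
     (\<forall>x y. ip y x = cnj (ip x y)) \<and>
     (\<forall>x. ip x x = complex_of_real ((norm x)\<^sup>2))"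

definition bounded_clinear_op :: "(complex \<Rightarrow> 'a::real_normed_vector \<Rightarrow> 'a) \<Rightarrow> ('a \<Rightarrow> 'a) \<Rightarrow> bool" where
  "bounded_clinear_op sm T \<longleftrightarrow>
     (\<forall>x y. T (x + y) = T x + T y) \<and> (\<forall>a x. T (sm a x) = sm a (T x)) \<and>
     (\<exists>K. \<forall>x. norm (T x) \<le> norm x * K)"

text \<open>Strongly continuous (C0) semigroup of bounded complex-linear operators,
indexed by t \<ge> 0 (values at negative t are irrelevant).\<close>

definition C0_semigroup :: "(complex \<Rightarrow> 'a::real_normed_vector \<Rightarrow> 'a) \<Rightarrow> (real \<Rightarrow> 'a \<Rightarrow> 'a) \<Rightarrow> bool" where
  "C0_semigroup sm U \<longleftrightarrow>
     (\<forall>t\<ge>0. bounded_clinear_op sm (U t)) \<and>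
     U 0 = id \<and>
     (\<forall>s t. 0 \<le> s \<longrightarrow> 0 \<le> t \<longrightarrow> U (s + t) = U s \<circ> U t) \<and>
     (\<forall>x. ((\<lambda>t. U t x) \<longlongrightarrow> x) (at_right 0))"

text \<open>(Possibly unbounded) operators are represented by their graphs.
The generator: Lx = lim_{h \<searrow> 0} (U(h)x - x)/h, on the set where the limit exists.\<close>

definition generator_graph :: "(real \<Rightarrow> 'a::real_normed_vector \<Rightarrow> 'a) \<Rightarrow> ('a \<times> 'a) set" where
  "generator_graph U = {(x, y). ((\<lambda>h. scaleR (1 / h) (U h x - x)) \<longlongrightarrow> y) (at_right 0)}"

definition adjoint_dom :: "('a \<Rightarrow> 'a \<Rightarrow> complex) \<Rightarrow> ('a \<times> 'a) set \<Rightarrow> 'a set" where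
  "adjoint_dom ip G = {z. \<exists>w. \<forall>(x, y) \<in> G. ip y z = ip x w}"

definition projP :: "(complex \<Rightarrow> 'a \<Rightarrow> 'a) \<Rightarrow> ('a \<Rightarrow> 'a \<Rightarrow> complex) \<Rightarrow> 'a \<Rightarrow> 'a \<Rightarrow> 'a" where
  "projP sm ip z x = sm (ip x z / ip z z) z"

definition projQ :: "(complex \<Rightarrow> 'a \<Rightarrow> 'a::ab_group_add) \<Rightarrow> ('a \<Rightarrow> 'a \<Rightarrow> complex) \<Rightarrow> 'a \<Rightarrow> 'a \<Rightarrow> 'a" where
  "projQ sm ip z x = x - projP sm ip z x"

definition QL_graph :: "(complex \<Rightarrow> 'a \<Rightarrow> 'a::ab_group_add) \<Rightarrow> ('a \<Rightarrow> 'a \<Rightarrow> complex) \<Rightarrow> 'a \<Rightarrow> ('a \<times> 'a) set \<Rightarrow> ('a \<times> 'a) set" where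
  "QL_graph sm ip z G = {(x, projQ sm ip z y) | x y. (x, y) \<in> G}"

end

theory Submission
  imports Defs
begin

lemma c0_bound:
  fixes S :: "real \<Rightarrow> 'a::banach \<Rightarrow> 'a"
  assumes lin: "\<And>t. t \<ge> 0 \<Longrightarrow> bounded_linear (S t)"
    and cont0: "\<And>x. ((\<lambda>t. S t x) \<longlongrightarrow> x) (at_right 0)"
    and S0: "S 0 = id"
  shows "\<exists>d>0. \<exists>M. \<forall>t\<in>{0..d}. \<forall>x. norm (S t x) \<le> M * norm x"
proof -
  define E where "E n = {x. \<forall>t\<in>{0..1/real (Suc n)}. norm (S t x) \<le> real (Suc n)}" for n
  have clE: "closed (E n)" for n
  proof -
    have "E n = (\<Inter>t\<in>{0..1/real (Suc n)}. {x. norm (S t x) \<le> real (Suc n)})"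
      unfolding E_def by auto
    moreover have "closed {x. norm (S t x) \<le> real (Suc n)}" if "t \<in> {0..1/real (Suc n)}" for t
    proof -
      have "continuous_on UNIV (S t)" using lin[of t] that linear_continuous_on by auto
      then show ?thesis by (intro closed_Collect_le continuous_intros) auto
    qed
    ultimately show ?thesis by auto
  qed
  have unE: "(\<Union>n. E n) = UNIV"
  proof -
    have "x \<in> (\<Union>n. E n)" for x
    proof -
      have "\<forall>\<^sub>F t in at_right 0. dist (S t x) x < 1"
        using cont0[of x] by (simp add: tendsto_iff)
      then obtain d where d: "d > 0" "\<And>t. 0 < t \<Longrightarrow> t < d \<Longrightarrow> dist (S t x) x < 1"
        by (auto simp: eventually_at_right_field)
      obtain n :: nat where n: "n \<ge> norm x + 1" "n \<ge> 2 / d"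
        by (meson max.boundedE real_arch_simple)
      have "1 / real (Suc n) < d"
      proof -
        have "real (Suc n) > 1 / d" using n d by (smt (verit) divide_right_mono of_nat_Suc)
        then show ?thesis using d
          by (metis divide_less_eq mult.commute of_nat_0_less_iff zero_less_Suc)
      qed
      moreover have "norm (S t x) \<le> real (Suc n)" if "t \<in> {0..1/real (Suc n)}" "1 / real (Suc n) < d" for t
      proof (cases "t = 0")
        case True then show ?thesis using S0 n by simp
      next
        case False
        then have "dist (S t x) x < 1" using that d by auto
        then show ?thesis using n by (smt (verit) dist_norm norm_triangle_ineq2 of_nat_Suc)
      qed
      ultimately show ?thesis unfolding E_def by blast
    qed
    then show ?thesis by auto
  qed
  have "\<exists>n. interior (E n) \<noteq> {}"
  proof (rule ccontr)
    assume "\<not> ?thesis"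
    then have "euclidean interior_of \<Union>(range E) = {}"
      by (intro Baire_category_alt) (auto simp: completely_metrizable_space_euclidean clE interior_of_openin)
    then show False using unE by (simp add: interior_of_openin)
  qed
  then obtain n x0 where "x0 \<in> interior (E n)" by auto
  then obtain e where e: "e > 0" "ball x0 e \<subseteq> E n"
    by (meson mem_interior)
  define N where "N = real (Suc n)"
  have bnd: "norm (S t y) \<le> (4 * N / e) * norm y" if t: "t \<in> {0..1/N}" for t y
  proof (cases "y = 0")
    case True then show ?thesis using lin[of t] t linear_0 bounded_linear.linear by fastforce
  next
    case False
    define c where "c = e / 2 / norm y"
    have c: "c > 0" using False e by (simp add: c_def)
    have "x0 \<in> E n" "x0 + c *\<^sub>R y \<in> E n"
      using e c False by (auto simp: c_def dist_norm intro!: subsetD[OF e(2)])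
    then have "norm (S t x0) \<le> N" "norm (S t (x0 + c *\<^sub>R y)) \<le> N"
      using t unfolding E_def N_def by auto
    moreover have "S t (x0 + c *\<^sub>R y) = S t x0 + c *\<^sub>R S t y"
      using lin[of t] t by (simp add: bounded_linear.linear linear_add linear_scale)
    ultimately have "norm (c *\<^sub>R S t y) \<le> 2 * N"
      by (smt (verit) add_diff_cancel_left' norm_triangle_ineq4)
    then have "c * norm (S t y) \<le> 2 * N" using c by simp
    then have "norm (S t y) \<le> 2 * N / c" using c by (simp add: field_simps)
    also have "2 * N / c = (4 * N / e) * norm y" using False e by (simp add: c_def field_simps)
    finally show ?thesis .
  qed
  have "N > 0" by (simp add: N_def)
  then show ?thesis
    using bnd by (intro exI[of _ "1/N"] conjI exI[of _ "4 * N / e"]) auto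
qed


lemma c0_right:
  fixes S :: "real \<Rightarrow> 'a::banach \<Rightarrow> 'a"
  assumes lin: "\<And>t. t \<ge> 0 \<Longrightarrow> bounded_linear (S t)"
    and cont0: "\<And>x. ((\<lambda>t. S t x) \<longlongrightarrow> x) (at_right 0)"
    and semi: "\<And>s t. 0 \<le> s \<Longrightarrow> 0 \<le> t \<Longrightarrow> S (s + t) = S s \<circ> S t"
    and s0: "s0 \<ge> 0"
  shows "((\<lambda>s. S s x) \<longlongrightarrow> S s0 x) (at_right s0)"
proof -
  have "((\<lambda>u. S s0 (S u x)) \<longlongrightarrow> S s0 x) (at_right 0)"
    using bounded_linear.tendsto[OF lin[OF s0] cont0] .
  moreover have "\<forall>\<^sub>F u in at_right 0. S s0 (S u x) = S (u + s0) x"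
    using eventually_at_right_less[of "0::real"]
  proof eventually_elim
    case (elim u)
    then show ?case using semi[of s0 u] s0 by (simp add: add.commute)
  qed
  ultimately have "((\<lambda>u. S (u + s0) x) \<longlongrightarrow> S s0 x) (at_right 0)"
    using tendsto_cong[of "\<lambda>u. S s0 (S u x)" "\<lambda>u. S (u + s0) x"] by simp
  then show ?thesis
    unfolding at_right_to_0[of s0] filterlim_filtermap by simp
qed

lemma c0_left:
  fixes S :: "real \<Rightarrow> 'a::banach \<Rightarrow> 'a"
  assumes lin: "\<And>t. t \<ge> 0 \<Longrightarrow> bounded_linear (S t)"
    and cont0: "\<And>x. ((\<lambda>t. S t x) \<longlongrightarrow> x) (at_right 0)"
    and semi: "\<And>s t. 0 \<le> s \<Longrightarrow> 0 \<le> t \<Longrightarrow> S (s + t) = S s \<circ> S t"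
    and S0: "S 0 = id"
    and s0: "s0 > 0"
  shows "((\<lambda>s. S s x) \<longlongrightarrow> S s0 x) (at_left s0)"
proof -
  obtain \<delta> M where dM: "\<delta> > 0" "\<And>t y. t \<in> {0..\<delta>} \<Longrightarrow> norm (S t y) \<le> M * norm y"
    using c0_bound[OF lin cont0 S0] by blast
  define d where "d = min \<delta> s0"
  have d: "d > 0" "d \<le> \<delta>" "d \<le> s0" using dM s0 by (auto simp: d_def)
  have ev: "\<forall>\<^sub>F u in at_right (0::real). 0 < u \<and> u < d"
    using d by (auto simp: eventually_at_right_field intro!: exI[of _ d])
  have "((\<lambda>u. S (d - u) x - S d x) \<longlongrightarrow> 0) (at_right 0)"
  proof (rule Lim_null_comparison)
    show "\<forall>\<^sub>F u in at_right 0. norm (S (d - u) x - S d x) \<le> M * norm (x - S u x)"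
      using ev
    proof eventually_elim
      case (elim u)
      have "S d x = S (d - u) (S u x)" using semi[of "d - u" u] elim by auto
      then have "S (d - u) x - S d x = S (d - u) (x - S u x)"
        using lin[of "d - u"] elim by (simp add: bounded_linear.linear linear_diff)
      then show ?case using dM(2)[of "d - u"] elim d by auto
    qed
    have "((\<lambda>u. M * norm (x - S u x)) \<longlongrightarrow> M * norm (x - x)) (at_right 0)"
      by (intro tendsto_intros cont0)
    then show "((\<lambda>u. M * norm (x - S u x)) \<longlongrightarrow> 0) (at_right 0)" by simp
  qed
  then have "((\<lambda>u. S d x + (S (d - u) x - S d x)) \<longlongrightarrow> S d x + 0) (at_right 0)"
    by (intro tendsto_intros)
  then have "((\<lambda>u. S (d - u) x) \<longlongrightarrow> S d x) (at_right 0)" by simp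
  moreover have lsd: "bounded_linear (S (s0 - d))" using lin d by auto
  ultimately have "((\<lambda>u. S (s0 - d) (S (d - u) x)) \<longlongrightarrow> S (s0 - d) (S d x)) (at_right 0)"
    using bounded_linear.tendsto[OF lsd] by blast
  moreover have "S (s0 - d) (S d x) = S s0 x" using semi[of "s0 - d" d] d by auto
  moreover have "\<forall>\<^sub>F u in at_right (0::real). S (s0 - d) (S (d - u) x) = S (-(u + - s0)) x"
    using ev
  proof eventually_elim
    case (elim u)
    then show ?case using semi[of "s0 - d" "d - u"] d by auto
  qed
  ultimately have "((\<lambda>u. S (-(u + - s0)) x) \<longlongrightarrow> S s0 x) (at_right 0)"
    using tendsto_cong[of "\<lambda>u. S (s0 - d) (S (d - u) x)" "\<lambda>u. S (-(u + - s0)) x"] by simp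
  then show ?thesis
    unfolding at_left_minus[of s0] at_right_to_0[of "-s0"] filterlim_filtermap by (simp add: o_def)
qed

lemma c0_cont:
  fixes S :: "real \<Rightarrow> 'a::banach \<Rightarrow> 'a"
  assumes lin: "\<And>t. t \<ge> 0 \<Longrightarrow> bounded_linear (S t)"
    and cont0: "\<And>x. ((\<lambda>t. S t x) \<longlongrightarrow> x) (at_right 0)"
    and semi: "\<And>s t. 0 \<le> s \<Longrightarrow> 0 \<le> t \<Longrightarrow> S (s + t) = S s \<circ> S t"
    and S0: "S 0 = id"
  shows "continuous_on {0..} (\<lambda>s. S s x)"
  unfolding continuous_on_def
proof
  fix s0 :: real assume "s0 \<in> {0..}"
  show "((\<lambda>s. S s x) \<longlongrightarrow> S s0 x) (at s0 within {0..})"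
  proof (cases "s0 = 0")
    case True
    then show ?thesis using c0_right[OF lin cont0 semi, of 0 x] by (simp add: at_within_Ici_at_right)
  next
    case False
    then have "s0 > 0" using \<open>s0 \<in> {0..}\<close> by auto
    then have "((\<lambda>s. S s x) \<longlongrightarrow> S s0 x) (at s0)"
      by (intro filterlim_split_at c0_left[OF lin cont0 semi S0] c0_right[OF lin cont0 semi]) auto
    then show ?thesis by (rule tendsto_within_subset) auto
  qed
qed


lemma right_deriv_integral:
  fixes f :: "real \<Rightarrow> 'a::banach"
  assumes cf: "continuous_on {0..} f" and a: "a \<ge> 0"
  shows "((\<lambda>r. (1/r) *\<^sub>R integral {a..a+r} f) \<longlongrightarrow> f a) (at_right 0)"
proof -
  have "continuous_on {a..a+1} f" by (rule continuous_on_subset[OF cf]) (use a in auto)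
  then have "((\<lambda>u. integral {a..u} f) has_vector_derivative f a) (at a within {a..a+1})"
    by (rule integral_has_vector_derivative) auto
  then have "((\<lambda>u. integral {a..u} f) has_vector_derivative f a) (at_right a)"
    by (simp add: at_within_Icc_at_right)
  then have "((\<lambda>y. (integral {a..y} f - integral {a..a} f - (y - a) *\<^sub>R f a) /\<^sub>R norm (y - a)) \<longlongrightarrow> 0) (at_right a)"
    unfolding has_vector_derivative_def has_derivative_at_within by blast
  then have lim: "((\<lambda>r. (integral {a..r + a} f - integral {a..a} f - (r + a - a) *\<^sub>R f a) /\<^sub>R norm (r + a - a)) \<longlongrightarrow> 0) (at_right 0)"
    unfolding at_right_to_0[of a] filterlim_filtermap by simp
  have ev: "\<forall>\<^sub>F r in at_right 0. (integral {a..r + a} f - integral {a..a} f - (r + a - a) *\<^sub>R f a) /\<^sub>R norm (r + a - a)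
      = (1/r) *\<^sub>R integral {a..a+r} f - f a"
    using eventually_at_right_less[of "0::real"]
  proof eventually_elim
    case (elim r)
    then show ?case by (simp add: add.commute scaleR_diff_right inverse_eq_divide)
  qed
  have "((\<lambda>r. (1/r) *\<^sub>R integral {a..a+r} f - f a) \<longlongrightarrow> 0) (at_right 0)"
    by (rule tendsto_cong[OF ev, THEN iffD1, OF lim])
  then have "((\<lambda>r. ((1/r) *\<^sub>R integral {a..a+r} f - f a) + f a) \<longlongrightarrow> 0 + f a) (at_right 0)"
    by (intro tendsto_intros)
  then show ?thesis by simp
qed

lemma c0_integral_gen:
  fixes S :: "real \<Rightarrow> 'a::banach \<Rightarrow> 'a"
  assumes lin: "\<And>t. t \<ge> 0 \<Longrightarrow> bounded_linear (S t)"
    and semi: "\<And>s t. 0 \<le> s \<Longrightarrow> 0 \<le> t \<Longrightarrow> S (s + t) = S s \<circ> S t"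
    and S0: "S 0 = id"
    and cf: "continuous_on {0..} (\<lambda>s. S s x)"
    and h: "h \<ge> 0"
  shows "((\<lambda>r. (1/r) *\<^sub>R (S r (integral {0..h} (\<lambda>s. S s x)) - integral {0..h} (\<lambda>s. S s x)))
          \<longlongrightarrow> S h x - x) (at_right 0)"
proof -
  define f where "f = (\<lambda>s. S s x)"
  have intf: "f integrable_on {0..c}" for c
    by (rule integrable_continuous_real, rule continuous_on_subset[OF cf[folded f_def]]) auto
  have key: "S r (integral {0..h} f) - integral {0..h} f = integral {h..h+r} f - integral {0..r} f"
    if r: "r > 0" for r
  proof -
    have "S r (integral {0..h} f) = integral {0..h} (S r \<circ> f)"
      using integral_linear[OF intf lin[of r]] r by simp
    also have "\<dots> = integral {0..h} (\<lambda>s. f (s + r))"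
    proof (rule integral_cong)
      fix s :: real assume "s \<in> {0..h}"
      then show "(S r \<circ> f) s = f (s + r)"
        using semi[of r s] r by (simp add: f_def add.commute)
    qed
    also have "\<dots> = integral {r..h+r} f"
      using integral_shift_real_ivl[where a=r and b="h+r" and c=r and f=f] by simp
    finally have 1: "S r (integral {0..h} f) = integral {r..h+r} f" .
    have 2: "integral {0..r} f + integral {r..h+r} f = integral {0..h+r} f"
      by (rule Henstock_Kurzweil_Integration.integral_combine) (use r h intf in auto)
    have 3: "integral {0..h} f + integral {h..h+r} f = integral {0..h+r} f"
      by (rule Henstock_Kurzweil_Integration.integral_combine) (use r h intf in auto)
    have 4: "integral {r..h+r} f = integral {0..h+r} f - integral {0..r} f"
      using 2 by (simp add: eq_diff_eq add.commute)
    have 5: "integral {0..h} f = integral {0..h+r} f - integral {h..h+r} f"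
      using 3 by (simp add: eq_diff_eq)
    have "S r (integral {0..h} f) - integral {0..h} f = integral {r..h+r} f - integral {0..h} f"
      using 1 by simp
    also have "\<dots> = (integral {0..h+r} f - integral {0..r} f) - (integral {0..h+r} f - integral {h..h+r} f)"
      by (subst 4, subst 5, rule refl)
    also have "\<dots> = integral {h..h+r} f - integral {0..r} f" by (simp add: algebra_simps)
    finally show ?thesis .
  qed
  have lim: "((\<lambda>r. (1/r) *\<^sub>R integral {h..h+r} f - (1/r) *\<^sub>R integral {0..0+r} f) \<longlongrightarrow> f h - f 0) (at_right 0)"
    by (intro tendsto_intros right_deriv_integral[OF cf[folded f_def]]) (use h in auto)
  have ev: "\<forall>\<^sub>F r in at_right 0. (1/r) *\<^sub>R integral {h..h+r} f - (1/r) *\<^sub>R integral {0..0+r} f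
      = (1/r) *\<^sub>R (S r (integral {0..h} f) - integral {0..h} f)"
    using eventually_at_right_less[of "0::real"]
  proof eventually_elim
    case (elim r)
    then show ?case using key[of r] by (simp add: scaleR_diff_right)
  qed
  show ?thesis
    using tendsto_cong[OF ev, THEN iffD1, OF lim] S0 unfolding f_def by simp
qed


locale chs =
  fixes sm :: "complex \<Rightarrow> 'a::banach \<Rightarrow> 'a" and ip :: "'a \<Rightarrow> 'a \<Rightarrow> complex"
  assumes H: "complex_hilbert_space sm ip"
begin

lemma sm_real: "sm (complex_of_real r) x = r *\<^sub>R x"
  using H unfolding complex_hilbert_space_def by blast
lemma sm_mult: "sm (a * b) x = sm a (sm b x)"
  using H unfolding complex_hilbert_space_def by blast
lemma sm_addl: "sm (a + b) x = sm a x + sm b x"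
  using H unfolding complex_hilbert_space_def by blast
lemma sm_addr: "sm a (x + y) = sm a x + sm a y"
  using H unfolding complex_hilbert_space_def by blast
lemma ip_addl: "ip (x + y) z = ip x z + ip y z"
  using H unfolding complex_hilbert_space_def by blast
lemma ip_sml: "ip (sm a x) y = a * ip x y"
  using H unfolding complex_hilbert_space_def by blast
lemma ip_cnj: "ip y x = cnj (ip x y)"
  using H unfolding complex_hilbert_space_def by blast
lemma ip_self: "ip x x = complex_of_real ((norm x)\<^sup>2)"
  using H unfolding complex_hilbert_space_def by blast

lemma sm_0r[simp]: "sm a 0 = 0"
  using sm_addr[of a 0 0] by simp
lemma sm_minusr: "sm a (- x) = - sm a x"
proof -
  have "sm a x + sm a (- x) = 0" using sm_addr[of a x "-x"] by simp
  then show ?thesis by (simp add: add_eq_0_iff)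
qed
lemma sm_diffr: "sm a (x - y) = sm a x - sm a y"
  using sm_addr[of a x "-y"] sm_minusr[of a y] by simp
lemma sm_0l[simp]: "sm 0 x = 0"
  using sm_real[of 0 x] by simp
lemma sm_1l[simp]: "sm 1 x = x"
  using sm_real[of 1 x] by simp

lemma ip_0l[simp]: "ip 0 y = 0"
  using ip_addl[of 0 0 y] by simp
lemma ip_0r[simp]: "ip y 0 = 0"
  using ip_cnj[of 0 y] by simp
lemma ip_minusl: "ip (- x) y = - ip x y"
proof -
  have "ip x y + ip (- x) y = 0" using ip_addl[of x "-x" y] by simp
  then show ?thesis by (simp add: add_eq_0_iff)
qed
lemma ip_diffl: "ip (x - y) z = ip x z - ip y z"
  using ip_addl[of x "-y" z] ip_minusl[of y z] by simp
lemma ip_cnj': "cnj (ip x y) = ip y x"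
  using ip_cnj[where x=x and y=y] by simp
lemma ip_addr: "ip z (x + y) = ip z x + ip z y"
proof -
  have "ip z (x + y) = cnj (ip (x + y) z)" by (simp only: ip_cnj')
  also have "\<dots> = cnj (ip x z) + cnj (ip y z)" by (simp only: ip_addl complex_cnj_add)
  also have "\<dots> = ip z x + ip z y" by (simp only: ip_cnj')
  finally show ?thesis .
qed
lemma ip_smr: "ip z (sm a x) = cnj a * ip z x"
proof -
  have "ip z (sm a x) = cnj (ip (sm a x) z)" by (simp only: ip_cnj')
  also have "\<dots> = cnj a * cnj (ip x z)" by (simp only: ip_sml complex_cnj_mult)
  also have "\<dots> = cnj a * ip z x" by (simp only: ip_cnj')
  finally show ?thesis .
qed
lemma ip_scaleRl: "ip (r *\<^sub>R x) y = complex_of_real r * ip x y"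
  using ip_sml[of "complex_of_real r" x y] sm_real by simp

lemma cauchy_schwarz: "norm (ip x z) \<le> norm x * norm z"
proof (cases "z = 0")
  case True then show ?thesis by simp
next
  case False
  have zz: "ip z z = complex_of_real ((norm z)\<^sup>2)" by (rule ip_self)
  have zz0: "ip z z \<noteq> 0" using False zz by simp
  define c where "c = ip x z / ip z z"
  define w where "w = x - sm c z"
  have wz: "ip w z = 0" using zz0 by (simp add: w_def ip_diffl ip_sml c_def)
  have zw: "ip z w = 0" using ip_cnj[of w z] wz by simp
  have xw: "x = w + sm c z" by (simp add: w_def)
  have eq: "ip x x = ip w w + (c * cnj c) * ip z z"
    unfolding xw by (simp add: ip_addl ip_addr ip_sml ip_smr wz zw algebra_simps)
  have cc: "c * cnj c = complex_of_real ((cmod c)\<^sup>2)" using complex_norm_square[of c] by simp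
  have "complex_of_real ((norm x)\<^sup>2) = complex_of_real ((norm w)\<^sup>2) + complex_of_real ((cmod c)\<^sup>2) * complex_of_real ((norm z)\<^sup>2)"
    using eq by (simp only: ip_self cc)
  then have "(norm x)\<^sup>2 = (norm w)\<^sup>2 + (cmod c)\<^sup>2 * (norm z)\<^sup>2"
    by (simp only: of_real_mult[symmetric] of_real_add[symmetric] of_real_eq_iff)
  then have 1: "(cmod c)\<^sup>2 * (norm z)\<^sup>2 \<le> (norm x)\<^sup>2" by simp
  have "cmod c = cmod (ip x z) / (norm z)\<^sup>2"
  proof -
    have "cmod (ip z z) = (norm z)\<^sup>2" unfolding zz by (simp only: norm_of_real) simp
    then show ?thesis by (simp add: c_def norm_divide)
  qed
  moreover have Np: "(norm z)\<^sup>2 > 0" using False by simp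
  ultimately have "(cmod (ip x z))\<^sup>2 / (norm z)\<^sup>2 \<le> (norm x)\<^sup>2"
  proof -
    have gen: "\<And>q N::real. N > 0 \<Longrightarrow> (q / N)\<^sup>2 * N = q\<^sup>2 / N"
      by (simp add: power2_eq_square field_simps)
    show ?thesis using 1 gen[OF Np, of "cmod (ip x z)"] \<open>cmod c = _\<close> by simp
  qed
  then have "(cmod (ip x z))\<^sup>2 \<le> (norm x)\<^sup>2 * (norm z)\<^sup>2"
    using Np by (simp add: divide_le_eq)
  then have "(cmod (ip x z))\<^sup>2 \<le> (norm x * norm z)\<^sup>2" by (simp add: power_mult_distrib)
  then show ?thesis by (rule power2_le_imp_le) simp
qed


lemma norm_sm: "norm (sm c x) = cmod c * norm x"
proof -
  have "complex_of_real ((norm (sm c x))\<^sup>2) = complex_of_real ((cmod c)\<^sup>2 * (norm x)\<^sup>2)"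
  proof -
    have "complex_of_real ((norm (sm c x))\<^sup>2) = ip (sm c x) (sm c x)" by (simp only: ip_self)
    also have "\<dots> = (c * cnj c) * ip x x" by (simp add: ip_sml ip_smr)
    also have "\<dots> = complex_of_real ((cmod c)\<^sup>2) * complex_of_real ((norm x)\<^sup>2)"
      using complex_norm_square[of c] ip_self[of x] by simp
    finally show ?thesis by simp
  qed
  then have "(norm (sm c x))\<^sup>2 = (cmod c * norm x)\<^sup>2"
    by (simp only: of_real_eq_iff power_mult_distrib)
  then show ?thesis by (simp add: power2_eq_iff_nonneg)
qed

lemma bclin_bl: "bounded_clinear_op sm T \<Longrightarrow> bounded_linear T"
proof -
  assume a: "bounded_clinear_op sm T"
  then obtain K where K: "\<And>x. norm (T x) \<le> norm x * K" unfolding bounded_clinear_op_def by blast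
  show ?thesis
    by (rule bounded_linear_intro[where K = K]) (use a K in \<open>auto simp: bounded_clinear_op_def sm_real[symmetric]\<close>)
qed

lemma ipz_bl: "bounded_linear (\<lambda>y. ip y z)"
  by (rule bounded_linear_intro[where K = "norm z"])
     (auto simp: ip_addl ip_scaleRl scaleR_conv_of_real cauchy_schwarz)

lemma closed_perp: "closed {p. ip (snd p) z = 0}"
proof -
  have "continuous_on UNIV (\<lambda>p. ip (snd p) z)"
    using linear_continuous_on[OF ipz_bl[of z]] continuous_on_snd
    by (intro continuous_on_compose2[OF linear_continuous_on[OF ipz_bl[of z]]]) (auto intro: continuous_intros)
  then show ?thesis by (intro closed_Collect_eq) (auto intro: continuous_intros)
qed

lemma P_add: "projP sm ip z (x + y) = projP sm ip z x + projP sm ip z y"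
  by (simp add: projP_def ip_addl add_divide_distrib sm_addl)
lemma P_sm: "projP sm ip z (sm a x) = sm a (projP sm ip z x)"
  by (simp add: projP_def ip_sml sm_mult[symmetric])
lemma Q_add: "projQ sm ip z (x + y) = projQ sm ip z x + projQ sm ip z y"
  by (simp add: projQ_def P_add)
lemma Q_sm: "projQ sm ip z (sm a x) = sm a (projQ sm ip z x)"
  by (simp add: projQ_def P_sm sm_diffr)
lemma PQ: "projP sm ip z x + projQ sm ip z x = x"
  by (simp add: projQ_def)
lemma P_norm: "norm (projP sm ip z x) \<le> norm x"
proof (cases "z = 0")
  case True then show ?thesis by (simp add: projP_def)
next
  case False
  have nz: "cmod (ip z z) = (norm z)\<^sup>2" unfolding ip_self by (simp only: norm_of_real) simp
  have "norm (projP sm ip z x) = cmod (ip x z) / (norm z)\<^sup>2 * norm z"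
    by (simp add: projP_def norm_sm norm_divide nz)
  also have "\<dots> \<le> (norm x * norm z) / (norm z)\<^sup>2 * norm z"
    by (intro mult_right_mono divide_right_mono cauchy_schwarz) auto
  also have "\<dots> = norm x" using False by (simp add: power2_eq_square)
  finally show ?thesis .
qed
lemma P_perp: "ip y z = 0 \<Longrightarrow> projP sm ip z y = 0"
  by (simp add: projP_def)
lemma Q_perp: "z \<noteq> 0 \<Longrightarrow> ip (projQ sm ip z x) z = 0"
proof -
  assume "z \<noteq> 0"
  then have "ip z z \<noteq> 0" by (simp add: ip_self)
  then show ?thesis by (simp add: projQ_def projP_def ip_diffl ip_sml)
qed
lemma PP: "z \<noteq> 0 \<Longrightarrow> projP sm ip z (projP sm ip z x) = projP sm ip z x"
proof -
  assume "z \<noteq> 0"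
  then have "ip z z \<noteq> 0" by (simp add: ip_self)
  then show ?thesis by (simp add: projP_def ip_sml)
qed
end

theorem lemma2:
  fixes sm :: "complex \<Rightarrow> 'a::banach \<Rightarrow> 'a"
    and ip :: "'a \<Rightarrow> 'a \<Rightarrow> complex"
    and U S :: "real \<Rightarrow> 'a \<Rightarrow> 'a"
    and z :: 'a
  assumes H: "complex_hilbert_space sm ip"
    and U: "C0_semigroup sm U"
    and z_adj: "z \<in> adjoint_dom ip (generator_graph U)"
    and z_ne: "z \<noteq> 0"
    and S: "C0_semigroup sm S"
    and S_gen: "generator_graph S = closure (QL_graph sm ip z (generator_graph U))"
  shows "C0_semigroup sm (\<lambda>t x. projP sm ip z x + S t (projQ sm ip z x))
    \<and> generator_graph (\<lambda>t x. projP sm ip z x + S t (projQ sm ip z x))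
        = {(x, y). (projQ sm ip z x, y) \<in> closure (QL_graph sm ip z (generator_graph U))}"
proof -
  interpret chs sm ip using H by unfold_locales
  let ?P = "projP sm ip z" and ?Q = "projQ sm ip z"
  have Sbc: "\<And>t. t \<ge> 0 \<Longrightarrow> bounded_clinear_op sm (S t)" and S0: "S 0 = id"
    and Ssemi: "\<And>s t. 0 \<le> s \<Longrightarrow> 0 \<le> t \<Longrightarrow> S (s + t) = S s \<circ> S t"
    and Scont: "\<And>x. ((\<lambda>t. S t x) \<longlongrightarrow> x) (at_right 0)"
    using S unfolding C0_semigroup_def by auto
  have Slin: "\<And>t. t \<ge> 0 \<Longrightarrow> bounded_linear (S t)" using Sbc bclin_bl by blast
  have perp: "ip (S t x - x) z = 0" if t: "t \<ge> 0" for t x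
  proof -
    have "continuous_on {0..} (\<lambda>s. S s x)" by (rule c0_cont[OF Slin Scont Ssemi S0])
    then have "(integral {0..t} (\<lambda>s. S s x), S t x - x) \<in> generator_graph S"
      unfolding generator_graph_def using c0_integral_gen[OF Slin Ssemi S0 _ t] by auto
    moreover have "QL_graph sm ip z (generator_graph U) \<subseteq> {p. ip (snd p) z = 0}"
      unfolding QL_graph_def using Q_perp[OF z_ne] by auto
    then have "closure (QL_graph sm ip z (generator_graph U)) \<subseteq> {p. ip (snd p) z = 0}"
      by (rule closure_minimal) (rule closed_perp)
    ultimately show ?thesis using S_gen by auto
  qed
  have SQ: "?P (S t (?Q x)) = 0" if t: "t \<ge> 0" for t x
  proof -
    have "ip (S t (?Q x)) z = ip (S t (?Q x) - ?Q x) z + ip (?Q x) z" by (simp add: ip_diffl)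
    also have "\<dots> = 0" using perp[OF t] Q_perp[OF z_ne] by simp
    finally show ?thesis by (rule P_perp)
  qed
  have C0: "C0_semigroup sm (\<lambda>t x. ?P x + S t (?Q x))"
    unfolding C0_semigroup_def
  proof (intro conjI allI impI)
    fix t :: real assume t: "t \<ge> 0"
    obtain K where K: "\<And>x. norm (S t x) \<le> norm x * K"
      using Sbc[OF t] unfolding bounded_clinear_op_def by blast
    have Sadd: "S t (x + y) = S t x + S t y" for x y using Sbc[OF t] unfolding bounded_clinear_op_def by blast
    have Ssm: "S t (sm a x) = sm a (S t x)" for a x using Sbc[OF t] unfolding bounded_clinear_op_def by blast
    have bnd: "norm (?P x + S t (?Q x)) \<le> norm x * (1 + 2 * \<bar>K\<bar>)" for x
    proof -
      have nQ: "norm (?Q x) \<le> 2 * norm x"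
        using P_norm[of z x] norm_triangle_ineq4[of x "?P x"] by (simp add: projQ_def)
      have "norm (S t (?Q x)) \<le> norm (?Q x) * \<bar>K\<bar>"
        using K[of "?Q x"] by (smt (verit) mult_left_mono norm_ge_zero)
      also have "\<dots> \<le> 2 * norm x * \<bar>K\<bar>" using nQ by (simp add: mult_right_mono)
      finally have "norm (S t (?Q x)) \<le> 2 * norm x * \<bar>K\<bar>" .
      then show ?thesis using P_norm[of z x] norm_triangle_ineq[of "?P x" "S t (?Q x)"]
        by (simp add: algebra_simps)
    qed
    show "bounded_clinear_op sm (\<lambda>x. ?P x + S t (?Q x))"
      unfolding bounded_clinear_op_def
      using bnd by (auto simp: P_add Q_add Sadd P_sm Q_sm Ssm sm_addr)
  next
    show "(\<lambda>x. ?P x + S 0 (?Q x)) = id" using S0 by (auto simp: PQ)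
  next
    fix s t :: real assume st: "0 \<le> s" "0 \<le> t"
    show "(\<lambda>x. ?P x + S (s + t) (?Q x)) = (\<lambda>x. ?P x + S s (?Q x)) \<circ> (\<lambda>x. ?P x + S t (?Q x))"
    proof
      fix x
      have "?P (?P x + S t (?Q x)) = ?P x" using P_add PP[OF z_ne] SQ[OF st(2)] by simp
      moreover have "?Q (?P x + S t (?Q x)) = S t (?Q x)"
        using \<open>?P (?P x + S t (?Q x)) = ?P x\<close> by (simp add: projQ_def)
      ultimately show "?P x + S (s + t) (?Q x) = ((\<lambda>x. ?P x + S s (?Q x)) \<circ> (\<lambda>x. ?P x + S t (?Q x))) x"
        using Ssemi[OF st] by simp
    qed
  next
    fix x
    have "((\<lambda>t. ?P x + S t (?Q x)) \<longlongrightarrow> ?P x + ?Q x) (at_right 0)"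
      by (intro tendsto_intros Scont)
    then show "((\<lambda>t. ?P x + S t (?Q x)) \<longlongrightarrow> x) (at_right 0)" by (simp add: PQ)
  qed
  have "generator_graph (\<lambda>t x. ?P x + S t (?Q x)) = {(x, y). (?Q x, y) \<in> generator_graph S}"
  proof -
    have eqh: "?P x + S h (?Q x) - x = S h (?Q x) - ?Q x" for h x
      using PQ[of z x] by (metis add_diff_cancel_left)
    show ?thesis unfolding generator_graph_def eqh by simp
  qed
  then show ?thesis using C0 S_gen by simp
qed

end
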